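(* Consider an $n$-player game in which player $i$ has action set $X_i\subseteq\mathbb{R}$ and differentiable utility $u_i(\mathbf{x})$, with $X=\prod_i X_i$ convex. Let $\boldsymbol{\gamma}\in\mathbb{R}_{++}^n$ and $\Sigma=(\sigma_{ij})\in\mathbb{R}_+^{n\times n}$, and suppose the game is a $(\boldsymbol{\gamma},\Sigma)$-near-potential game with respect to a potential function $u(\mathbf{x})$. If (1) $u$ is $c$-strongly concave on $\mathbf{x}\in X$, and (2) $c>\sigma_{\max}(\Sigma)$, where $\sigma_{\max}(\Sigma)$ is the maximum singular value of $\Sigma$, then the game has a unique Nash equilibrium $\mathbf{x}^*$. Moreover, the $\boldsymbol{\gamma}$-scaled pseudo-gradient ascent dynamic $\mathbf{x}(t)$ from an arbitrary initial point $\mathbf{x}(0)$ converges to $\mathbf{x}^*$ exponentially: there is $c_0>0$ with $\|\mathbf{x}(t)-\mathbf{x}^*\|=O(\exp(-c_0 t))$.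
   Context: A differentiable $g:Y\to\mathbb{R}$ on a convex set $Y\subseteq\mathbb{R}^d$ is $c$-(strongly) concave ($c\ge 0$) if $g(y)\le g(x)+\langle y-x,\nabla g(x)\rangle-\frac{c}{2}\|y-x\|^2$ for all $x,y\in Y$. The game is a $(\boldsymbol{\gamma},\Sigma)$-near-potential game with respect to $u$ if for all $i,j$ (including $i=j$) and every fixed $\mathbf{x}_{-j}\in\prod_{l\ne j}X_l$, the function $x_j\mapsto \gamma_i\frac{\partial u_i}{\partial x_i}(x_j,\mathbf{x}_{-j})-\frac{\partial u}{\partial x_i}(x_j,\mathbf{x}_{-j})$ is $\sigma_{ij}$-Lipschitz on $X_j$. A (pure) Nash equilibrium is $\mathbf{x}\in X$ with $u_i(x_i',\mathbf{x}_{-i})\le u_i(\mathbf{x})$ for all $i$ and $x_i'\in X_i$. The $\boldsymbol{\gamma}$-scaled pseudo-gradient ascent dynamic is the system $\frac{dx_i}{dt}(t)=\gamma_i\frac{\partial u_i}{\partial x_i}(\mathbf{x}(t))$, $i=1,\dots,n$.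
   Formalization: Each action set $X_i$ is also nonempty and closed, and the exponential convergence covers only those trajectories of the dynamic that remain in X for all t >= 0. The statement above fails without it. *)

theory Defs
  imports "HOL-Analysis.Analysis" "HOL-Library.Landau_Symbols"
begin

definition prod_actions :: "('n::finite \<Rightarrow> real set) \<Rightarrow> (real^'n) set" where
  "prod_actions Xs = {x. \<forall>i. x $ i \<in> Xs i}"

definition upd_coord :: "real^'n \<Rightarrow> 'n \<Rightarrow> real \<Rightarrow> real^'n" where
  "upd_coord x j a = (\<chi> k. if k = j then a else x $ k)"

definition strongly_concave_grad :: "real \<Rightarrow> (real^'n) set \<Rightarrow> (real^'n \<Rightarrow> real) \<Rightarrow> (real^'n \<Rightarrow> real^'n) \<Rightarrow> bool" where
  "strongly_concave_grad c Y g Dg \<longleftrightarrow>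
     (\<forall>x\<in>Y. \<forall>y\<in>Y. g y \<le> g x + (y - x) \<bullet> Dg x - c / 2 * (norm (y - x))\<^sup>2)"

text \<open>(gamma, Sigma)-near-potential game with respect to u; Du i = gradient of u_i,
  Du0 = gradient of the potential u; partial derivative wrt x_i is the i-th component.\<close>
definition near_potential ::
  "('n::finite \<Rightarrow> real set) \<Rightarrow> ('n \<Rightarrow> real) \<Rightarrow> real^'n^'n \<Rightarrow> ('n \<Rightarrow> real^'n \<Rightarrow> real^'n) \<Rightarrow> (real^'n \<Rightarrow> real^'n) \<Rightarrow> bool" where
  "near_potential Xs \<gamma> \<Sigma> Du Du0 \<longleftrightarrow>
     (\<forall>i j. \<forall>x \<in> prod_actions Xs.
        (\<Sigma> $ i $ j)-lipschitz_on (Xs j)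
          (\<lambda>a. \<gamma> i * (Du i (upd_coord x j a) $ i) - Du0 (upd_coord x j a) $ i))"

definition max_singular_value :: "real^'n^'n \<Rightarrow> real" where
  "max_singular_value A = Sup ((\<lambda>v. norm (A *v v)) ` {v. norm v = 1})"

definition nash_equilibrium :: "('n::finite \<Rightarrow> real set) \<Rightarrow> ('n \<Rightarrow> real^'n \<Rightarrow> real) \<Rightarrow> real^'n \<Rightarrow> bool" where
  "nash_equilibrium Xs u x \<longleftrightarrow>
     x \<in> prod_actions Xs \<and> (\<forall>i. \<forall>a \<in> Xs i. u i (upd_coord x i a) \<le> u i x)"

end

theory Submission
  imports Defs
begin



lemma upd_nth[simp]: "upd_coord x j a $ k = (if k = j then a else x $ k)"
  by (simp add: upd_coord_def)

lemma upd_same[simp]: "upd_coord x j (x $ j) = x"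
  by (simp add: upd_coord_def vec_eq_iff)

lemma upd_in: "x \<in> prod_actions Xs \<Longrightarrow> a \<in> Xs j \<Longrightarrow> upd_coord x j a \<in> prod_actions Xs"
  by (simp add: prod_actions_def)

lemma closed_prod_actions: "(\<And>i. closed (Xs i)) \<Longrightarrow> closed (prod_actions Xs)"
  unfolding prod_actions_def
  apply (rule closed_Collect_all)
  using closed_vimage_vec_nth by (auto simp: vimage_def)

lemma sigma_bdd: "bdd_above ((\<lambda>v. norm ((A::real^'n^'m) *v v)) ` {v. norm v = 1})"
proof -
  obtain K where "\<And>v. norm (A *v v) \<le> norm v * K"
    using bounded_linear.bounded[OF matrix_vector_mul_bounded_linear[of A]] by blast
  then show ?thesis unfolding bdd_above_def by (rule_tac x=K in exI) (metis (mono_tags) imageE mem_Collect_eq mult_1)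
qed

lemma sigma_bound: "norm (A *v v) \<le> max_singular_value A * norm (v::real^'n)"
proof (cases "v = 0")
  case True then show ?thesis by simp
next
  case False
  let ?w = "v /\<^sub>R norm v"
  have "norm ?w = 1" using False by simp
  then have "norm (A *v ?w) \<le> max_singular_value A"
    unfolding max_singular_value_def by (intro cSUP_upper sigma_bdd) auto
  moreover have "A *v ?w = (A *v v) /\<^sub>R norm v"
    by (simp add: matrix_vector_mult_scaleR)
  ultimately show ?thesis using False by (simp add: field_simps)
qed

lemma sigma_nonneg: "max_singular_value (A::real^'n^'n) \<ge> 0"
proof -
  obtain i :: 'n where True by simp
  have "norm (axis i (1::real)) = 1" by simp
  then have "norm (A *v axis i 1) \<le> max_singular_value A"
    unfolding max_singular_value_def by (intro cSUP_upper sigma_bdd) auto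
  then show ?thesis using norm_ge_zero order_trans by blast
qed




locale game =
  fixes Xs :: "'n::finite \<Rightarrow> real set"
    and ui :: "'n \<Rightarrow> real^'n \<Rightarrow> real" and Du :: "'n \<Rightarrow> real^'n \<Rightarrow> real^'n"
    and u :: "real^'n \<Rightarrow> real" and Du0 :: "real^'n \<Rightarrow> real^'n"
    and \<gamma> :: "'n \<Rightarrow> real" and \<Sigma> :: "real^'n^'n" and c :: real
  assumes Xs_nonempty: "\<And>i. Xs i \<noteq> {}"
    and Xs_closed: "\<And>i. closed (Xs i)"
    and X_convex: "convex (prod_actions Xs)"
    and ui_diff: "\<And>i x. x \<in> prod_actions Xs \<Longrightarrow> GDERIV (ui i) x :> Du i x"
    and u_diff: "\<And>x. x \<in> prod_actions Xs \<Longrightarrow> GDERIV u x :> Du0 x"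
    and gamma_pos: "\<And>i. \<gamma> i > 0"
    and near_pot: "near_potential Xs \<gamma> \<Sigma> Du Du0"
    and concave: "strongly_concave_grad c (prod_actions Xs) u Du0"
    and c_gt: "c > max_singular_value \<Sigma>"
begin

abbreviation "X \<equiv> prod_actions Xs"
definition "F x = (\<chi> i. \<gamma> i * (Du i x $ i))"
definition "G x = F x - Du0 x"
abbreviation "sm \<equiv> max_singular_value \<Sigma>"

lemma X_ne: "X \<noteq> {}"
proof -
  have "(\<chi> k. SOME a. a \<in> Xs k) \<in> X"
    using Xs_nonempty by (simp add: prod_actions_def some_in_eq)
  then show ?thesis by blast
qed

lemma Xs_convex: "convex (Xs i)"
proof (rule convexI)
  fix p q and s t :: real
  assume pq: "p \<in> Xs i" "q \<in> Xs i" and st: "0 \<le> s" "0 \<le> t" "s + t = 1"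
  obtain x0 where x0: "x0 \<in> X" using X_ne by blast
  have "s *\<^sub>R upd_coord x0 i p + t *\<^sub>R upd_coord x0 i q \<in> X"
    using convexD[OF X_convex upd_in[OF x0 pq(1)] upd_in[OF x0 pq(2)] st] .
  then have "(s *\<^sub>R upd_coord x0 i p + t *\<^sub>R upd_coord x0 i q) $ i \<in> Xs i"
    unfolding prod_actions_def mem_Collect_eq by (rule spec)
  then show "s *\<^sub>R p + t *\<^sub>R q \<in> Xs i" by simp
qed

lemma G_lip: "x \<in> X \<Longrightarrow> a \<in> Xs j \<Longrightarrow> b \<in> Xs j \<Longrightarrow>
   \<bar>G (upd_coord x j a) $ i - G (upd_coord x j b) $ i\<bar> \<le> \<Sigma> $ i $ j * \<bar>a - b\<bar>"
  using near_pot unfolding near_potential_def lipschitz_on_def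
  by (auto simp: G_def F_def dist_real_def)

lemma G_coord:
  assumes x: "x \<in> X" and y: "y \<in> X"
  shows "\<bar>G y $ i - G x $ i\<bar> \<le> (\<Sum>j\<in>UNIV. \<Sigma> $ i $ j * \<bar>y $ j - x $ j\<bar>)"
proof -
  define z where "z S = (\<chi> k. if k \<in> S then y $ k else x $ k)" for S
  have "finite S \<Longrightarrow> z S \<in> X \<and> \<bar>G (z S) $ i - G x $ i\<bar> \<le> (\<Sum>j\<in>S. \<Sigma> $ i $ j * \<bar>y $ j - x $ j\<bar>)" for S
  proof (induction S rule: finite_induct)
    case empty
    have "z {} = x" by (simp add: z_def vec_eq_iff)
    then show ?case using x by simp
  next
    case (insert j S)
    have zs: "z (insert j S) = upd_coord (z S) j (y $ j)"
      by (simp add: z_def vec_eq_iff)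
    have zs2: "z S = upd_coord (z S) j (x $ j)"
      using insert(2) by (simp add: z_def vec_eq_iff)
    have xj: "x $ j \<in> Xs j" and yj: "y $ j \<in> Xs j" using x y by (auto simp: prod_actions_def)
    have inX: "z (insert j S) \<in> X" using zs upd_in[OF conjunct1[OF insert(3)] yj] by simp
    have "\<bar>G (z (insert j S)) $ i - G (z S) $ i\<bar> \<le> \<Sigma> $ i $ j * \<bar>y $ j - x $ j\<bar>"
      using G_lip[OF conjunct1[OF insert(3)] yj xj, of i] unfolding zs2[symmetric] zs[symmetric] .
    then show ?case using insert inX by auto
  qed
  moreover have "z UNIV = y" by (simp add: z_def vec_eq_iff)
  ultimately show ?thesis using finite_UNIV by auto
qed

lemma G_lipschitz:
  assumes x: "x \<in> X" and y: "y \<in> X"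
  shows "norm (G y - G x) \<le> sm * norm (y - x)"
proof -
  define d where "d = (\<chi> j. \<bar>y $ j - x $ j\<bar>)"
  have "norm (G y - G x) \<le> norm (\<Sigma> *v d)"
  proof (rule norm_le_componentwise_cart)
    fix i
    have "\<bar>G y $ i - G x $ i\<bar> \<le> (\<Sum>j\<in>UNIV. \<Sigma> $ i $ j * \<bar>y $ j - x $ j\<bar>)"
      by (rule G_coord[OF x y])
    also have "\<dots> = (\<Sigma> *v d) $ i" by (simp add: matrix_vector_mult_def d_def)
    also have "\<dots> \<le> \<bar>(\<Sigma> *v d) $ i\<bar>" by simp
    finally show "norm ((G y - G x) $ i) \<le> norm ((\<Sigma> *v d) $ i)" by simp
  qed
  also have "\<dots> \<le> sm * norm d" by (rule sigma_bound)
  also have "norm d = norm (y - x)"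
    unfolding d_def norm_vec_def by (simp add: L2_set_def)
  finally show ?thesis .
qed

lemma Du0_mono:
  assumes x: "x \<in> X" and y: "y \<in> X"
  shows "(x - y) \<bullet> (Du0 x - Du0 y) \<le> - c * (norm (x - y))\<^sup>2"
proof -
  have 1: "u y \<le> u x + (y - x) \<bullet> Du0 x - c / 2 * (norm (y - x))\<^sup>2"
   and 2: "u x \<le> u y + (x - y) \<bullet> Du0 y - c / 2 * (norm (x - y))\<^sup>2"
    using concave x y unfolding strongly_concave_grad_def by auto
  have "norm (y - x) = norm (x - y)" by (rule norm_minus_commute)
  with 1 2 show ?thesis by (simp add: algebra_simps inner_diff_left inner_diff_right)
qed

lemma F_mono:
  assumes x: "x \<in> X" and y: "y \<in> X"
  shows "(x - y) \<bullet> (F x - F y) \<le> - (c - sm) * (norm (x - y))\<^sup>2"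
proof -
  have FG: "F x - F y = (Du0 x - Du0 y) + (G x - G y)" by (simp add: G_def)
  have "(x - y) \<bullet> (G x - G y) \<le> norm (x - y) * norm (G x - G y)"
    by (rule norm_cauchy_schwarz)
  also have "\<dots> \<le> norm (x - y) * (sm * norm (x - y))"
    by (intro mult_left_mono G_lipschitz[OF y x]) auto
  finally have "(x - y) \<bullet> (G x - G y) \<le> sm * (norm (x - y))\<^sup>2"
    by (simp add: power2_eq_square algebra_simps)
  then show ?thesis using Du0_mono[OF x y] unfolding FG inner_add_right
    by (simp add: algebra_simps)
qed

end



lemma max_line:
  fixes f :: "'a::real_inner \<Rightarrow> real"
  assumes d: "(f has_derivative (\<lambda>h. h \<bullet> D)) (at p)"
    and m: "\<And>t. 0 \<le> t \<Longrightarrow> t \<le> 1 \<Longrightarrow> f (p + t *\<^sub>R (q - p)) \<le> f p"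
  shows "(q - p) \<bullet> D \<le> 0"
proof (rule ccontr)
  assume neg: "\<not> ?thesis"
  have lin: "((\<lambda>t::real. p + t *\<^sub>R (q - p)) has_derivative (\<lambda>t. t *\<^sub>R (q - p))) (at 0)"
    by (auto intro!: derivative_eq_intros)
  have d0: "(f has_derivative (\<lambda>h. h \<bullet> D)) (at (p + 0 *\<^sub>R (q - p)))" using d by simp
  have "((\<lambda>t. f (p + t *\<^sub>R (q - p))) has_derivative (\<lambda>t. (t *\<^sub>R (q - p)) \<bullet> D)) (at 0)"
    using has_derivative_compose[OF lin d0] by simp
  moreover have "(\<lambda>t. (t *\<^sub>R (q - p)) \<bullet> D) = (*) ((q - p) \<bullet> D)"
    by (auto simp: fun_eq_iff)
  ultimately have "((\<lambda>t. f (p + t *\<^sub>R (q - p))) has_real_derivative ((q - p) \<bullet> D)) (at 0)"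
    by (simp add: has_field_derivative_def)
  from DERIV_pos_inc_right[OF this] neg obtain e where e: "e > 0"
    and inc: "\<And>h. h > 0 \<Longrightarrow> h < e \<Longrightarrow> f (p + 0 *\<^sub>R (q - p)) < f (p + (0 + h) *\<^sub>R (q - p))"
    by force
  define h where "h = min (e / 2) 1"
  have "h > 0" "h < e" "h \<le> 1" using e by (auto simp: h_def)
  then show False using inc[of h] m[of h] by simp
qed

context game
begin

lemma c_pos: "c > 0"
  using c_gt sigma_nonneg[of \<Sigma>] by linarith

lemma u_cont: "continuous_on X u"
  using u_diff has_derivative_continuous continuous_at_imp_continuous_on
  unfolding gderiv_def by blast

lemma conv_line: "p \<in> X \<Longrightarrow> q \<in> X \<Longrightarrow> 0 \<le> t \<Longrightarrow> t \<le> 1 \<Longrightarrow> p + t *\<^sub>R (q - p) \<in> X"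
proof -
  assume "p \<in> X" "q \<in> X" "0 \<le> t" "t \<le> 1"
  then have "(1 - t) *\<^sub>R p + t *\<^sub>R q \<in> X" using X_convex unfolding convex_alt by blast
  moreover have "(1 - t) *\<^sub>R p + t *\<^sub>R q = p + t *\<^sub>R (q - p)" by (simp add: algebra_simps)
  ultimately show ?thesis by simp
qed

lemma argmax_exists: "\<exists>y\<in>X. \<forall>y'\<in>X. (y' - y) \<bullet> (Du0 y + g) \<le> 0"
proof -
  obtain x0 where x0: "x0 \<in> X" using X_ne by blast
  define h where "h y = u y + y \<bullet> g" for y
  define B where "B = norm (Du0 x0 + g)"
  define R where "R = 2 * B / c"
  define K where "K = X \<inter> cball x0 R"
  have "compact K" unfolding K_def
    by (intro closed_Int_compact closed_prod_actions Xs_closed compact_cball)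
  moreover have "K \<noteq> {}" using x0 c_pos by (auto simp: K_def R_def B_def)
  moreover have "continuous_on K h" unfolding h_def K_def
    by (intro continuous_intros continuous_on_subset[OF u_cont]) auto
  ultimately obtain y where yK: "y \<in> K" and ymax: "\<And>z. z \<in> K \<Longrightarrow> h z \<le> h y"
    using continuous_attains_sup by metis
  have x0K: "x0 \<in> K" using x0 c_pos by (auto simp: K_def R_def B_def)
  have glob: "h z \<le> h y" if z: "z \<in> X" for z
  proof (cases "z \<in> cball x0 R")
    case True then show ?thesis using ymax z by (auto simp: K_def)
  next
    case False
    let ?r = "norm (z - x0)"
    have r: "?r > R" using False by (simp add: dist_norm norm_minus_commute)
    have "u z \<le> u x0 + (z - x0) \<bullet> Du0 x0 - c / 2 * ?r\<^sup>2"
      using concave x0 z unfolding strongly_concave_grad_def by blast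
    then have "h z - h x0 \<le> (z - x0) \<bullet> (Du0 x0 + g) - c / 2 * ?r\<^sup>2"
      by (simp add: h_def inner_add_right inner_diff_left)
    also have "(z - x0) \<bullet> (Du0 x0 + g) \<le> ?r * B"
      unfolding B_def by (rule norm_cauchy_schwarz)
    finally have 1: "h z - h x0 \<le> ?r * (B - c / 2 * ?r)" by (simp add: power2_eq_square algebra_simps)
    have "c * R = 2 * B" using c_pos by (simp add: R_def)
    moreover have "c * ?r > c * R" using mult_strict_left_mono[OF r c_pos] .
    ultimately have "c / 2 * ?r > B" by linarith
    moreover have "R \<ge> 0" using c_pos by (simp add: R_def B_def)
    then have "?r > 0" using r by linarith
    ultimately have "?r * (B - c / 2 * ?r) < 0" by (simp add: mult_pos_neg)
    with 1 have "h z < h x0" by linarith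
    then show ?thesis using ymax[OF x0K] by linarith
  qed
  have yX: "y \<in> X" using yK by (simp add: K_def)
  have "(y' - y) \<bullet> (Du0 y + g) \<le> 0" if y': "y' \<in> X" for y'
  proof (rule max_line[where f = h])
    show "(h has_derivative (\<lambda>k. k \<bullet> (Du0 y + g))) (at y)"
      unfolding h_def using u_diff[OF yX] unfolding gderiv_def
      by (auto intro!: derivative_eq_intros simp: inner_add_right)
    show "h (y + t *\<^sub>R (y' - y)) \<le> h y" if "0 \<le> t" "t \<le> 1" for t
      using glob conv_line[OF yX y' that] by blast
  qed
  then show ?thesis using yX by blast
qed

lemma VI_exists: "\<exists>y\<in>X. \<forall>y'\<in>X. (y' - y) \<bullet> F y \<le> 0"
proof -
  define P where "P z y \<longleftrightarrow> y \<in> X \<and> (\<forall>y'\<in>X. (y' - y) \<bullet> (Du0 y + G z) \<le> 0)" for z y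
  define T where "T z = (SOME y. P z y)" for z
  have PT: "P z (T z)" for z
    unfolding T_def by (rule someI_ex) (use argmax_exists in \<open>auto simp: P_def\<close>)
  have lip: "dist (T z1) (T z2) \<le> (sm / c) * dist z1 z2" if z: "z1 \<in> X" "z2 \<in> X" for z1 z2
  proof -
    define y1 where "y1 = T z1"
    define y2 where "y2 = T z2"
    have y: "y1 \<in> X" "y2 \<in> X" using PT by (auto simp: P_def y1_def y2_def)
    have 1: "(y2 - y1) \<bullet> (Du0 y1 + G z1) \<le> 0" using PT[of z1] y by (auto simp: P_def y1_def)
    have 2: "(y1 - y2) \<bullet> (Du0 y2 + G z2) \<le> 0" using PT[of z2] y by (auto simp: P_def y2_def)
    have 3: "(y1 - y2) \<bullet> (Du0 y1 - Du0 y2) \<le> - c * (norm (y1 - y2))\<^sup>2"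
      by (rule Du0_mono[OF y])
    have "(y1 - y2) \<bullet> (G z1 - G z2) \<le> norm (y1 - y2) * norm (G z1 - G z2)"
      by (rule norm_cauchy_schwarz)
    also have "\<dots> \<le> norm (y1 - y2) * (sm * norm (z1 - z2))"
      by (intro mult_left_mono G_lipschitz[OF z(2) z(1)]) auto
    finally have 4: "(y1 - y2) \<bullet> (G z1 - G z2) \<le> norm (y1 - y2) * (sm * norm (z1 - z2))" .
    have "c * (norm (y1 - y2))\<^sup>2 \<le> (y1 - y2) \<bullet> (G z1 - G z2)"
      using 1 2 3 by (simp add: inner_diff_left inner_diff_right inner_add_right algebra_simps inner_commute)
    with 4 have 5: "c * (norm (y1 - y2))\<^sup>2 \<le> norm (y1 - y2) * (sm * norm (z1 - z2))" by linarith
    show ?thesis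
    proof (cases "norm (y1 - y2) = 0")
      case True then show ?thesis using c_pos sigma_nonneg[of \<Sigma>]
        by (simp add: y1_def y2_def)
    next
      case False
      then have "c * norm (y1 - y2) \<le> sm * norm (z1 - z2)" using 5
        by (simp add: power2_eq_square mult.assoc)
      then show ?thesis using c_pos by (simp add: dist_norm y1_def y2_def field_simps)
    qed
  qed
  have cX: "complete X" by (simp add: complete_eq_closed closed_prod_actions Xs_closed)
  have TX: "T ` X \<subseteq> X" using PT unfolding P_def by blast
  have c1: "0 \<le> sm / c" using c_pos sigma_nonneg[of \<Sigma>] by simp
  have c2: "sm / c < 1" using c_pos c_gt by simp
  have "\<exists>!x\<in>X. T x = x" by (rule Banach_fix[OF cX X_ne c1 c2 TX lip])
  then obtain y where y: "y \<in> X" "T y = y" by blast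
  then have "P y y" using PT[of y] by simp
  moreover have "Du0 y + G y = F y" by (simp add: G_def)
  ultimately show ?thesis by (auto simp: P_def)
qed

end



lemma conv_real_between: "convex (S::real set) \<Longrightarrow> a \<in> S \<Longrightarrow> b \<in> S \<Longrightarrow> a \<le> s \<Longrightarrow> s \<le> b \<Longrightarrow> s \<in> S"
  using is_interval_convex_1 is_interval_1 by blast

lemma upd_line: "upd_coord x i s = x + (s - x $ i) *\<^sub>R axis i (1::real)"
  by (simp add: vec_eq_iff axis_def)

lemma upd_inner: "(upd_coord x i a - x) \<bullet> v = (a - x $ i) * v $ i"
  by (simp add: upd_line inner_axis')

context game
begin

definition "VI x \<longleftrightarrow> x \<in> X \<and> (\<forall>y\<in>X. (y - x) \<bullet> F x \<le> 0)"

lemma VI_coord: "VI x \<Longrightarrow> a \<in> Xs i \<Longrightarrow> (a - x $ i) * (Du i x $ i) \<le> 0"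
proof -
  assume v: "VI x" and a: "a \<in> Xs i"
  then have "upd_coord x i a \<in> X" using upd_in by (auto simp: VI_def)
  then have "(upd_coord x i a - x) \<bullet> F x \<le> 0" using v by (auto simp: VI_def)
  then have "(a - x $ i) * (\<gamma> i * Du i x $ i) \<le> 0" by (simp add: upd_inner F_def)
  then have "\<gamma> i * ((a - x $ i) * Du i x $ i) \<le> 0" by (simp add: algebra_simps)
  then show ?thesis using gamma_pos[of i] by (simp add: mult_le_0_iff)
qed

lemma coord_VI:
  assumes x: "x \<in> X" and h: "\<And>i a. a \<in> Xs i \<Longrightarrow> (a - x $ i) * (Du i x $ i) \<le> 0"
  shows "VI x"
  unfolding VI_def
proof (intro conjI ballI x)
  fix y assume y: "y \<in> X"
  have "(y - x) \<bullet> F x = (\<Sum>i\<in>UNIV. \<gamma> i * ((y $ i - x $ i) * Du i x $ i))"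
    by (simp add: inner_vec_def F_def algebra_simps)
  also have "\<dots> \<le> 0"
  proof (rule sum_nonpos)
    fix i
    have "y $ i \<in> Xs i" using y by (simp add: prod_actions_def)
    from h[OF this] show "\<gamma> i * ((y $ i - x $ i) * Du i x $ i) \<le> 0"
      using gamma_pos[of i] by (simp add: mult_le_0_iff)
  qed
  finally show "(y - x) \<bullet> F x \<le> 0" .
qed

lemma nash_VI: "nash_equilibrium Xs ui x \<Longrightarrow> VI x"
proof -
  assume n: "nash_equilibrium Xs ui x"
  then have x: "x \<in> X" and best: "\<And>i a. a \<in> Xs i \<Longrightarrow> ui i (upd_coord x i a) \<le> ui i x"
    by (auto simp: nash_equilibrium_def)
  show ?thesis
  proof (rule coord_VI[OF x])
    fix i a assume a: "a \<in> Xs i"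
    have xi: "x $ i \<in> Xs i" using x by (simp add: prod_actions_def)
    have "(upd_coord x i a - x) \<bullet> Du i x \<le> 0"
    proof (rule max_line[where f = "ui i"])
      show "(ui i has_derivative (\<lambda>h. h \<bullet> Du i x)) (at x)"
        using ui_diff[OF x] by (simp add: gderiv_def)
      fix t :: real assume t: "0 \<le> t" "t \<le> 1"
      have "(1 - t) *\<^sub>R x $ i + t *\<^sub>R a \<in> Xs i"
        using Xs_convex[of i] xi a t unfolding convex_alt by blast
      then have m: "x $ i + t * (a - x $ i) \<in> Xs i" by (simp add: algebra_simps)
      have "x + t *\<^sub>R (upd_coord x i a - x) = upd_coord x i (x $ i + t * (a - x $ i))"
        by (simp add: vec_eq_iff)
      then show "ui i (x + t *\<^sub>R (upd_coord x i a - x)) \<le> ui i x"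
        using best[OF m] by simp
    qed
    then show "(a - x $ i) * (Du i x $ i) \<le> 0" by (simp add: upd_inner)
  qed
qed

lemma VI_unique: "VI x \<Longrightarrow> VI y \<Longrightarrow> x = y"
proof -
  assume vx: "VI x" and vy: "VI y"
  then have x: "x \<in> X" and y: "y \<in> X" by (auto simp: VI_def)
  have 1: "(y - x) \<bullet> F x \<le> 0" using vx y by (auto simp: VI_def)
  have 2: "(x - y) \<bullet> F y \<le> 0" using vy x by (auto simp: VI_def)
  have 3: "(x - y) \<bullet> (F x - F y) \<le> - (c - sm) * (norm (x - y))\<^sup>2" by (rule F_mono[OF x y])
  have "(x - y) \<bullet> (F x - F y) = - ((y - x) \<bullet> F x) - (x - y) \<bullet> F y"
    by (simp add: inner_diff_left inner_diff_right)
  with 1 2 3 have "(c - sm) * (norm (x - y))\<^sup>2 \<le> 0" by linarith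
  moreover have "c - sm > 0" using c_gt by simp
  ultimately have "(norm (x - y))\<^sup>2 \<le> 0" by (simp add: mult_le_0_iff)
  then show "x = y" by simp
qed

lemma VI_nash: "VI x \<Longrightarrow> nash_equilibrium Xs ui x"
proof -
  assume v: "VI x"
  then have x: "x \<in> X" by (simp add: VI_def)
  have "ui i (upd_coord x i a) \<le> ui i x" if a: "a \<in> Xs i" for i a
  proof -
    define \<phi> where "\<phi> s = ui i (upd_coord x i s)" for s
    define \<psi> where "\<psi> s = Du i (upd_coord x i s) $ i" for s
    have xi: "x $ i \<in> Xs i" using x by (simp add: prod_actions_def)
    have der: "(\<phi> has_real_derivative \<psi> s) (at s)" if s: "s \<in> Xs i" for s
    proof -
      have p: "upd_coord x i s \<in> X" using upd_in[OF x s] .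
      have lin: "((\<lambda>s. upd_coord x i s) has_derivative (\<lambda>h. h *\<^sub>R axis i (1::real))) (at s)"
        unfolding upd_line by (auto intro!: derivative_eq_intros)
      have "((\<lambda>s. ui i (upd_coord x i s)) has_derivative (\<lambda>h. (h *\<^sub>R axis i 1) \<bullet> Du i (upd_coord x i s))) (at s)"
        using has_derivative_compose[OF lin ui_diff[OF p, unfolded gderiv_def]] by simp
      moreover have "(\<lambda>h. (h *\<^sub>R axis i 1) \<bullet> Du i (upd_coord x i s)) = (*) (\<psi> s)"
        by (auto simp: fun_eq_iff \<psi>_def inner_axis')
      ultimately show ?thesis by (simp add: has_field_derivative_def \<phi>_def[abs_def])
    qed
    have mono: "(s - r) * (\<psi> s - \<psi> r) \<le> 0" if s: "s \<in> Xs i" and r: "r \<in> Xs i" for s r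
    proof -
      have ps: "upd_coord x i s \<in> X" and pr: "upd_coord x i r \<in> X" using upd_in[OF x] s r by auto
      have "(upd_coord x i s - upd_coord x i r) \<bullet> (F (upd_coord x i s) - F (upd_coord x i r))
          \<le> - (c - sm) * (norm (upd_coord x i s - upd_coord x i r))\<^sup>2"
        by (rule F_mono[OF ps pr])
      also have "\<dots> \<le> 0" using c_gt by (simp add: mult_le_0_iff)
      finally have "(upd_coord x i s - upd_coord x i r) \<bullet> (F (upd_coord x i s) - F (upd_coord x i r)) \<le> 0" .
      moreover have "upd_coord x i s - upd_coord x i r = (s - r) *\<^sub>R axis i 1"
        by (simp add: vec_eq_iff axis_def)
      ultimately have "(s - r) * (\<gamma> i * \<psi> s - \<gamma> i * \<psi> r) \<le> 0"
        by (simp add: inner_axis' F_def \<psi>_def)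
      then have "\<gamma> i * ((s - r) * (\<psi> s - \<psi> r)) \<le> 0" by (simp add: algebra_simps)
      then show ?thesis using gamma_pos[of i] by (simp add: mult_le_0_iff)
    qed
    have \<psi>x: "\<psi> (x $ i) = Du i x $ i" by (simp add: \<psi>_def)
    have vc: "(a - x $ i) * \<psi> (x $ i) \<le> 0" using VI_coord[OF v a] \<psi>x by simp
    have seg: "s \<in> Xs i" if "min a (x $ i) \<le> s" "s \<le> max a (x $ i)" for s
    proof (cases "a \<le> x $ i")
      case True then show ?thesis using that conv_real_between[OF Xs_convex a xi, of s] by (simp add: min_def max_def)
    next
      case False then show ?thesis using that conv_real_between[OF Xs_convex xi a, of s] by (simp add: min_def max_def)
    qed
    have cont: "continuous_on {min a (x $ i)..max a (x $ i)} \<phi>"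
    proof (rule continuous_at_imp_continuous_on, rule ballI)
      fix s assume "s \<in> {min a (x $ i)..max a (x $ i)}"
      then have "s \<in> Xs i" using seg by simp
      then show "isCont \<phi> s" using der DERIV_isCont by blast
    qed
    have "\<phi> a \<le> \<phi> (x $ i)"
    proof (cases "a \<le> x $ i")
      case True
      show ?thesis
      proof (rule DERIV_nonneg_imp_increasing_open[OF True])
        have "min a (x $ i) = a" "max a (x $ i) = x $ i" using True by auto
        then show "continuous_on {a..x $ i} \<phi>" using cont by simp
        fix s assume s: "a < s" "s < x $ i"
        have sX: "s \<in> Xs i" using seg s by auto
        have "\<psi> (x $ i) \<ge> 0" using vc s by (simp add: mult_le_0_iff)
        moreover have "(s - x $ i) * (\<psi> s - \<psi> (x $ i)) \<le> 0" using mono[OF sX xi] .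
        then have "\<psi> s \<ge> \<psi> (x $ i)" using s by (simp add: mult_le_0_iff)
        ultimately show "\<exists>y. (\<phi> has_real_derivative y) (at s) \<and> 0 \<le> y"
          using der[OF sX] by auto
      qed
    next
      case False
      then have le: "x $ i \<le> a" by simp
      show ?thesis
      proof (rule DERIV_nonpos_imp_decreasing_open[OF le])
        have "min a (x $ i) = x $ i" "max a (x $ i) = a" using le by auto
        then show "continuous_on {x $ i..a} \<phi>" using cont by simp
        fix s assume s: "x $ i < s" "s < a"
        have sX: "s \<in> Xs i" using seg s by auto
        have "\<psi> (x $ i) \<le> 0" using vc s by (simp add: mult_le_0_iff)
        moreover have "(s - x $ i) * (\<psi> s - \<psi> (x $ i)) \<le> 0" using mono[OF sX xi] .
        then have "\<psi> s \<le> \<psi> (x $ i)" using s by (simp add: mult_le_0_iff)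
        ultimately show "\<exists>y. (\<phi> has_real_derivative y) (at s) \<and> y \<le> 0"
          using der[OF sX] by auto
      qed
    qed
    then show ?thesis by (simp add: \<phi>_def)
  qed
  then show ?thesis using x by (simp add: nash_equilibrium_def)
qed

end



context game
begin

lemma dyn_conv:
  assumes v: "VI xs"
    and xX: "\<forall>t\<ge>0. x t \<in> X"
    and xd: "\<forall>t\<ge>0. (x has_vector_derivative (\<chi> i. \<gamma> i * (Du i (x t) $ i))) (at t within {0..})"
  shows "\<exists>c0>0. (\<lambda>t. norm (x t - xs)) \<in> O[at_top](\<lambda>t. exp (- c0 * t))"
proof -
  define k where "k = c - sm"
  have k: "k > 0" using c_gt by (simp add: k_def)
  have xsX: "xs \<in> X" using v by (simp add: VI_def)
  have xd': "(x has_vector_derivative F (x t)) (at t within {0..})" if "t \<ge> 0" for t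
    using xd that by (simp add: F_def)
  have cont: "continuous_on {0..} x"
    unfolding continuous_on_eq_continuous_within
    using has_vector_derivative_continuous[OF xd'] by simp
  define V where "V t = ((x t - xs) \<bullet> (x t - xs)) * exp (2 * k * t)" for t
  have dec: "V t \<le> V 0" if t: "t \<ge> 0" for t
  proof (rule DERIV_nonpos_imp_decreasing_open[OF t])
    show "continuous_on {0..t} V" unfolding V_def
      by (intro continuous_intros continuous_on_subset[OF cont]) auto
    fix s assume s: "0 < s" "s < t"
    have "s \<in> interior {0..}" using s by simp
    then have xda: "(x has_vector_derivative F (x s)) (at s)"
      using xd'[of s] s at_within_interior by fastforce
    then have xdh: "(x has_derivative (\<lambda>h. h *\<^sub>R F (x s))) (at s)"
      by (simp add: has_vector_derivative_def)
    let ?D = "(2 * ((x s - xs) \<bullet> F (x s)) + 2 * k * ((x s - xs) \<bullet> (x s - xs))) * exp (2 * k * s)"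
    have xm: "((\<lambda>s. x s - xs) has_derivative (\<lambda>h. h *\<^sub>R F (x s))) (at s)"
      using has_derivative_diff[OF xdh has_derivative_const[of xs]] by simp
    have "((\<lambda>s. (x s - xs) \<bullet> (x s - xs)) has_derivative
        (\<lambda>h. (x s - xs) \<bullet> (h *\<^sub>R F (x s)) + (h *\<^sub>R F (x s)) \<bullet> (x s - xs))) (at s)"
      by (rule has_derivative_inner[OF xm xm])
    moreover have "(\<lambda>h. (x s - xs) \<bullet> (h *\<^sub>R F (x s)) + (h *\<^sub>R F (x s)) \<bullet> (x s - xs))
        = (*) (2 * ((x s - xs) \<bullet> F (x s)))"
      by (auto simp: fun_eq_iff inner_commute algebra_simps)
    ultimately have d1: "((\<lambda>s. (x s - xs) \<bullet> (x s - xs)) has_real_derivative 2 * ((x s - xs) \<bullet> F (x s))) (at s)"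
      by (simp add: has_field_derivative_def)
    have d2: "((\<lambda>s. exp (2 * k * s)) has_real_derivative exp (2 * k * s) * (2 * k)) (at s)"
      by (auto intro!: derivative_eq_intros)
    have dV: "(V has_real_derivative ?D) (at s)"
      unfolding V_def[abs_def]
      by (rule DERIV_cong[OF DERIV_mult[OF d1 d2]]) (simp add: algebra_simps)
    have sX: "x s \<in> X" using xX s by simp
    have 1: "(x s - xs) \<bullet> (F (x s) - F xs) \<le> - k * (norm (x s - xs))\<^sup>2"
      using F_mono[OF sX xsX] by (simp add: k_def)
    have 2: "(x s - xs) \<bullet> F xs \<le> 0" using v sX by (simp add: VI_def)
    have "(x s - xs) \<bullet> F (x s) \<le> - k * ((x s - xs) \<bullet> (x s - xs))"
      using 1 2 by (simp add: inner_diff_right power2_norm_eq_inner)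
    then have "?D \<le> 0" by (simp add: mult_nonpos_nonneg)
    then show "\<exists>y. (V has_real_derivative y) (at s) \<and> y \<le> 0" using dV by blast
  qed
  have "norm (x t - xs) \<le> norm (x 0 - xs) * exp (- k * t)" if t: "t \<ge> 0" for t
  proof -
    have "(norm (x t - xs) * exp (k * t))\<^sup>2 = V t"
      by (simp add: V_def power_mult_distrib power2_norm_eq_inner exp_double[symmetric] power2_eq_square[of "exp _"] exp_add[symmetric] algebra_simps)
    also have "\<dots> \<le> V 0" by (rule dec[OF t])
    also have "V 0 = (norm (x 0 - xs))\<^sup>2" by (simp add: V_def power2_norm_eq_inner)
    finally have "norm (x t - xs) * exp (k * t) \<le> norm (x 0 - xs)"
      by (rule power2_le_imp_le) simp
    then have "norm (x t - xs) * exp (k * t) * exp (- k * t) \<le> norm (x 0 - xs) * exp (- k * t)"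
      by (rule mult_right_mono) simp
    then show ?thesis by (simp add: mult.assoc exp_add[symmetric])
  qed
  note bnd = this
  have "eventually (\<lambda>t. t \<ge> (0::real)) at_top" by (rule eventually_ge_at_top)
  then have "eventually (\<lambda>t. norm (norm (x t - xs)) \<le> norm (x 0 - xs) * norm (exp (- k * t))) at_top"
    by (rule eventually_mono) (use bnd in simp)
  then show ?thesis using k by (intro exI[of _ k]) (auto intro: bigoI)
qed

end

theorem lemma3p5:
  fixes Xs :: "'n::finite \<Rightarrow> real set"
    and ui :: "'n \<Rightarrow> real^'n \<Rightarrow> real" and Du :: "'n \<Rightarrow> real^'n \<Rightarrow> real^'n"
    and u :: "real^'n \<Rightarrow> real" and Du0 :: "real^'n \<Rightarrow> real^'n"
    and \<gamma> :: "'n \<Rightarrow> real" and \<Sigma> :: "real^'n^'n" and c :: real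
  assumes Xs_nonempty: "\<And>i. Xs i \<noteq> {}"
    and Xs_closed: "\<And>i. closed (Xs i)"
    and X_convex: "convex (prod_actions Xs)"
    and ui_diff: "\<And>i x. x \<in> prod_actions Xs \<Longrightarrow> GDERIV (ui i) x :> Du i x"
    and u_diff: "\<And>x. x \<in> prod_actions Xs \<Longrightarrow> GDERIV u x :> Du0 x"
    and gamma_pos: "\<And>i. \<gamma> i > 0"
    and Sigma_nonneg: "\<And>i j. \<Sigma> $ i $ j \<ge> 0"
    and near_pot: "near_potential Xs \<gamma> \<Sigma> Du Du0"
    and c_nonneg: "c \<ge> 0"
    and concave: "strongly_concave_grad c (prod_actions Xs) u Du0"
    and c_gt: "c > max_singular_value \<Sigma>"
  shows "\<exists>xs. nash_equilibrium Xs ui xs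
           \<and> (\<forall>y. nash_equilibrium Xs ui y \<longrightarrow> y = xs)
           \<and> (\<forall>x :: real \<Rightarrow> real^'n.
                (\<forall>t\<ge>0. x t \<in> prod_actions Xs) \<longrightarrow>
                (\<forall>t\<ge>0. (x has_vector_derivative (\<chi> i. \<gamma> i * (Du i (x t) $ i))) (at t within {0..})) \<longrightarrow>
                (\<exists>c0>0. (\<lambda>t. norm (x t - xs)) \<in> O[at_top](\<lambda>t. exp (- c0 * t))))"
proof -
  interpret g: game Xs ui Du u Du0 \<gamma> \<Sigma> c
    by (rule game.intro[OF Xs_nonempty Xs_closed X_convex ui_diff u_diff gamma_pos near_pot concave c_gt])
  obtain xs where xs: "xs \<in> prod_actions Xs" "\<forall>y'\<in>prod_actions Xs. (y' - xs) \<bullet> g.F xs \<le> 0"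
    using g.VI_exists by blast
  have v: "g.VI xs" using xs by (simp add: g.VI_def)
  show ?thesis
  proof (intro exI[of _ xs] conjI allI impI)
    show "nash_equilibrium Xs ui xs" by (rule g.VI_nash[OF v])
    fix y assume "nash_equilibrium Xs ui y"
    then show "y = xs" using g.VI_unique[OF v g.nash_VI] by simp
  next
    fix x :: "real \<Rightarrow> real^'n"
    assume "\<forall>t\<ge>0. x t \<in> prod_actions Xs"
      and "\<forall>t\<ge>0. (x has_vector_derivative (\<chi> i. \<gamma> i * (Du i (x t) $ i))) (at t within {0..})"
    then show "\<exists>c0>0. (\<lambda>t. norm (x t - xs)) \<in> O[at_top](\<lambda>t. exp (- c0 * t))"
      by (rule g.dyn_conv[OF v])
  qed
qed

end
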